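(* Let $\tau\ge1$ and two candidates $P,Q$. If $P$ beats $Q$ under Weighted Majority Rule 3, then $SC(P)\le\tau\,SC(Q)+2\,SC(Z)$ for every point $Z$ of the metric space.
   Context: Voters $N$ and candidates are points of an arbitrary metric space $(X,d)$; $SC(Y)=\sum_{i\in N}d(i,Y)$ for $Y\in X$. Let $A=\{i: d(i,Q)/d(i,P)\ge\tau\}$ and $B=\{j: d(j,P)/d(j,Q)\ge\tau\}$. Weighted Majority Rule 3 selects $P$ over $Q$ iff $|A|\ge|B|$ (all other voters are ignored). *)

theory Defs
  imports Main "HOL-Analysis.Analysis"
begin

definition social_cost :: "'v set \<Rightarrow> ('v \<Rightarrow> 'a::metric_space) \<Rightarrow> 'a \<Rightarrow> real" where
  "social_cost N loc Y = (\<Sum>i\<in>N. dist (loc i) Y)"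

text \<open>A = voters with d(i,Q)/d(i,P) \<ge> tau, written without division
(a zero denominator is read as ratio +infinity).\<close>
definition wm3_A :: "real \<Rightarrow> 'v set \<Rightarrow> ('v \<Rightarrow> 'a::metric_space) \<Rightarrow> 'a \<Rightarrow> 'a \<Rightarrow> 'v set" where
  "wm3_A \<tau> N loc P Q = {i\<in>N. dist (loc i) Q \<ge> \<tau> * dist (loc i) P}"

definition wmr3_selects :: "real \<Rightarrow> 'v set \<Rightarrow> ('v \<Rightarrow> 'a::metric_space) \<Rightarrow> 'a \<Rightarrow> 'a \<Rightarrow> bool" where
  "wmr3_selects \<tau> N loc P Q \<longleftrightarrow> card (wm3_A \<tau> N loc P Q) \<ge> card (wm3_A \<tau> N loc Q P)"

end

theory Submission
  imports Defs
begin

lemma pair_sum_le0: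
  fixes f :: "'v \<Rightarrow> real"
  assumes fin: "finite N" and SN: "S \<subseteq> N" and TN: "T \<subseteq> N" and disj: "S \<inter> T = {}"
    and c: "card S \<le> card T" and rest: "\<And>k. k \<in> N - S \<Longrightarrow> f k \<le> 0"
    and pr: "\<And>i j. i \<in> S \<Longrightarrow> j \<in> T \<Longrightarrow> f i + f j \<le> 0"
  shows "sum f N \<le> 0"
proof -
  have fT: "finite T" using fin TN finite_subset by blast
  have fS: "finite S" using fin SN finite_subset by blast
  obtain T' where T': "T' \<subseteq> T" "card T' = card S"
    using obtain_subset_with_card_n[OF c] by blast
  have fT': "finite T'" using fT T' finite_subset by blast
  obtain g where g: "bij_betw g S T'"
    using finite_same_card_bij[OF fS fT'] T' by metis
  have gT: "\<And>i. i \<in> S \<Longrightarrow> g i \<in> T" using g T' bij_betwE by blast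
  have d: "S \<inter> T' = {}" using disj T' by blast
  have N: "N = (S \<union> T') \<union> (N - (S \<union> T'))" using SN TN T' by blast
  have "sum f N = sum f (S \<union> T') + sum f (N - (S \<union> T'))"
    by (subst N, rule sum.union_disjoint) (use fin fS fT' in auto)
  also have "sum f (S \<union> T') = sum f S + sum f T'"
    using sum.union_disjoint[OF fS fT' d] .
  also have "sum f T' = sum (f \<circ> g) S"
    using sum.reindex_bij_betw[OF g, of f] by simp
  also have "sum f S + sum (f \<circ> g) S = (\<Sum>i\<in>S. f i + f (g i))"
    by (simp add: sum.distrib)
  also have "\<dots> \<le> 0" using pr gT by (intro sum_nonpos) auto
  also have "sum f (N - (S \<union> T')) \<le> 0"
    using rest by (intro sum_nonpos) auto
  finally show ?thesis by simp
qed

theorem mainTheorem16: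
  fixes \<tau> :: real and N :: "'v set" and loc :: "'v \<Rightarrow> 'a::metric_space" and P Q Z :: 'a
  assumes "finite N" and "\<tau> \<ge> 1" and "wmr3_selects \<tau> N loc P Q"
  shows "social_cost N loc P \<le> \<tau> * social_cost N loc Q + 2 * social_cost N loc Z"
proof -
  define A where "A = wm3_A \<tau> N loc P Q"
  define B where "B = wm3_A \<tau> N loc Q P"
  define f where "f k = dist (loc k) P - \<tau> * dist (loc k) Q - 2 * dist (loc k) Z" for k
  have fA: "finite A" "finite B" using assms(1) by (auto simp: A_def B_def wm3_A_def)
  have cAB: "card B \<le> card A" using assms(3) by (simp add: wmr3_selects_def A_def B_def)
  have "card (B - A) \<le> card (A - B)"
  proof -
    have "card (B - A) = card B - card (A \<inter> B)"
      using fA by (metis Int_commute card_Diff_subset_Int finite_Int Diff_Int2 inf.idem card_Diff_subset inf_le2)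
    moreover have "card (A - B) = card A - card (A \<inter> B)"
      using fA by (metis card_Diff_subset_Int finite_Int Diff_Int2 inf.idem card_Diff_subset inf_le1)
    ultimately show ?thesis using cAB by simp
  qed
  have Aprop: "dist (loc j) P \<le> dist (loc j) Q" if "j \<in> A" for j
  proof -
    have "\<tau> * dist (loc j) P \<le> dist (loc j) Q" using that by (simp add: A_def wm3_A_def)
    moreover have "dist (loc j) P \<le> \<tau> * dist (loc j) P"
      using assms(2) mult_right_mono[of 1 \<tau> "dist (loc j) P"] by simp
    ultimately show ?thesis by linarith
  qed
  have "sum f N \<le> 0"
  proof (rule pair_sum_le0[OF assms(1), of "B - A" "A - B"])
    show "B - A \<subseteq> N" "A - B \<subseteq> N" by (auto simp: A_def B_def wm3_A_def)
    show "(B - A) \<inter> (A - B) = {}" by blast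
    show "card (B - A) \<le> card (A - B)" by fact
  next
    fix k assume k: "k \<in> N - (B - A)"
    have q: "0 \<le> dist (loc k) Q" "0 \<le> dist (loc k) Z" by auto
    show "f k \<le> 0"
    proof (cases "k \<in> A")
      case True
      have "dist (loc k) Q \<le> \<tau> * dist (loc k) Q"
        using assms(2) mult_right_mono[of 1 \<tau> "dist (loc k) Q"] by simp
      then show ?thesis using Aprop[OF True] q unfolding f_def by linarith
    next
      case False
      with k have "k \<notin> B" by blast
      with k have "dist (loc k) P < \<tau> * dist (loc k) Q" by (auto simp: B_def wm3_A_def)
      then show ?thesis using q unfolding f_def by linarith
    qed
  next
    fix i j assume i: "i \<in> B - A" and j: "j \<in> A - B"
    have jP: "dist (loc j) P \<le> dist (loc j) Q" using Aprop j by blast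
    have t1: "dist (loc i) P \<le> dist (loc i) Z + dist (loc j) Z + dist (loc j) P"
      by (metis add.assoc add_le_cancel_right dist_commute dist_triangle order_trans)
    have t2: "dist (loc j) Q \<le> dist (loc j) Z + dist (loc i) Z + dist (loc i) Q"
      by (metis add.assoc add_le_cancel_right dist_commute dist_triangle order_trans)
    have "dist (loc i) Q \<le> \<tau> * dist (loc i) Q"
      using assms(2) mult_right_mono[of 1 \<tau> "dist (loc i) Q"] by simp
    moreover have "dist (loc j) Q \<le> \<tau> * dist (loc j) Q"
      using assms(2) mult_right_mono[of 1 \<tau> "dist (loc j) Q"] by simp
    ultimately show "f i + f j \<le> 0" using t1 t2 jP by (simp add: f_def)
  qed
  moreover have "sum f N = social_cost N loc P - \<tau> * social_cost N loc Q - 2 * social_cost N loc Z"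
    by (simp add: f_def social_cost_def sum_subtractf sum_distrib_left)
  ultimately show ?thesis by simp
qed

end
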